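(* Let $G$ be a simple graph on $n$ vertices with $cM_2(G)\ge cM_2(H)$ for every simple graph $H$ on $n$ vertices, and let $F$, $X$, $Y$, $N^+_F$ be as defined in the context. Then $N^+_F(u)\cap Y=N^+_F(v)\cap Y$ for all $u,v\in X$.
   Context: All graphs are finite and simple; $d_G(u)$ is the degree of $u$ and $cM_2(G)=\sum_{uv\in E(G)}|d_G(u)^2-d_G(v)^2|$. The canonical mixed graph $F$ of $G$ has vertex set $V(G)$; for each edge $uv\in E(G)$: if $d_G(u)>d_G(v)$ then $F$ contains the arc $\overrightarrow{uv}$, and if $d_G(u)=d_G(v)$ then $F$ contains the undirected edge $uv$. $d^+_F(u)$ (resp. $d^-_F(u)$) is the number of arcs of $F$ with tail (resp. head) $u$; $N^+_F(u)=\{w:\overrightarrow{uw}\in A(F)\}$. $X=\{u\in V(G): d^+_F(u)\ge d^-_F(u)\}$ and $Y=\{u\in V(G): d^+_F(u)< d^-_F(u)\}$. *)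

theory Defs
  imports Main
begin

definition simple_graph :: "'a set \<Rightarrow> 'a set set \<Rightarrow> bool" where
  "simple_graph V E \<longleftrightarrow> finite V \<and> (\<forall>e\<in>E. \<exists>u v. u \<in> V \<and> v \<in> V \<and> u \<noteq> v \<and> e = {u, v})"

definition deg :: "'a set set \<Rightarrow> 'a \<Rightarrow> nat" where
  "deg E u = card {e \<in> E. u \<in> e}"

(* cM_2(G) = sum over edges uv of |d(u)^2 - d(v)^2|; each unordered edge counted once
   (written as half the sum over ordered pairs, each edge giving two ordered pairs). *)
definition cM2 :: "'a set set \<Rightarrow> int" where
  "cM2 E = (\<Sum>(u, v)\<in>{(u, v). {u, v} \<in> E \<and> u \<noteq> v}.
              \<bar>int (deg E u)^2 - int (deg E v)^2\<bar>) div 2"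

(* arcs of the canonical mixed graph F: u -> w iff uw is an edge and d(u) > d(w) *)
definition arc :: "'a set set \<Rightarrow> 'a \<Rightarrow> 'a \<Rightarrow> bool" where
  "arc E u w \<longleftrightarrow> {u, w} \<in> E \<and> u \<noteq> w \<and> deg E u > deg E w"

definition outdeg :: "'a set set \<Rightarrow> 'a \<Rightarrow> nat" where
  "outdeg E u = card {w. arc E u w}"

definition indeg :: "'a set set \<Rightarrow> 'a \<Rightarrow> nat" where
  "indeg E u = card {w. arc E w u}"

definition out_nbrs :: "'a set set \<Rightarrow> 'a \<Rightarrow> 'a set" where
  "out_nbrs E u = {w. arc E u w}"

definition Xset :: "'a set \<Rightarrow> 'a set set \<Rightarrow> 'a set" where
  "Xset V E = {u \<in> V. outdeg E u \<ge> indeg E u}"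

definition Yset :: "'a set \<Rightarrow> 'a set set \<Rightarrow> 'a set" where
  "Yset V E = {u \<in> V. outdeg E u < indeg E u}"

end

theory Submission
  imports Defs
begin


definition hh :: "int \<Rightarrow> int \<Rightarrow> int" where "hh N t = t * (N^2 - t^2)"
definition dd :: "int \<Rightarrow> int \<Rightarrow> int" where "dd N t = N^2 - 3*t^2 - 3*t - 1"

lemma hh_ident: "hh N t - hh N x - dd N x * (t - x) = (t-x)*(3*x+1) - (t-x)^2*(2*x+t)"
  unfolding hh_def dd_def by (simp add: algebra_simps power2_eq_square power3_eq_cube)

lemma hh_step: "hh N (x+1) = hh N x + dd N x"
  unfolding hh_def dd_def by (simp add: algebra_simps power2_eq_square)

lemma tang: assumes "0 \<le> t" "0 \<le> x" shows "hh N t \<le> hh N x + dd N x * (t - x)"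
proof (cases "t \<le> x")
  case True
  have a: "(t-x)*(3*x+1) \<le> 0" using True assms by (simp add: mult_nonpos_nonneg)
  have b: "0 \<le> (t-x)^2*(2*x+t)" using assms by simp
  show ?thesis using hh_ident[of N t x] a b by linarith
next
  case False
  hence p: "1 \<le> t - x" by simp
  have "(t-x)*(3*x+1) \<le> (t-x)*(t-x)*(2*x+t)"
  proof -
    have "(t-x)*(3*x+1) \<le> (t-x)*(2*x+t)" using p False by (intro mult_left_mono) auto
    also have "\<dots> \<le> (t-x)*(t-x)*(2*x+t)" using p assms
      by (intro mult_right_mono) (auto simp: mult_le_cancel_left1)
    finally show ?thesis .
  qed
  then show ?thesis using hh_ident[of N t x] by (simp add: power2_eq_square)
qed

lemma tang_strict: assumes "0 \<le> t" "0 \<le> x" "t < x" shows "hh N t < hh N x + dd N x * (t - x)"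
proof -
  have a: "(t-x)*(3*x+1) < 0" using assms by (simp add: mult_neg_pos)
  have b: "0 \<le> (t-x)^2*(2*x+t)" using assms by simp
  show ?thesis using hh_ident[of N t x] a b by linarith
qed

lemma pure:
  fixes x y :: nat and Y :: "'v set" and t :: "'v \<Rightarrow> int"
  assumes fin: "finite Y" and cY: "card Y = y" and nn: "\<forall>v\<in>Y. 0 \<le> t v"
    and v0: "v0 \<in> Y" "1 \<le> t v0" "t v0 < int x"
    and S: "(\<Sum>v\<in>Y. t v) \<le> int x * int y"
    and N: "N = int x + int y - 1"
  shows "\<exists>k\<le>x+y. (\<Sum>v\<in>Y. hh N (t v)) < int (x+y-k) * hh N (int k)"
proof -
  have y1: "y \<ge> 1" using v0 fin cY by (metis One_nat_def Suc_leI card_gt_0_iff empty_iff)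
  have x2: "x \<ge> 2" using v0 by linarith
  have N2: "N \<ge> 2" using N x2 y1 by linarith
  show ?thesis
  proof (cases "dd N (int x) \<ge> 0")
    case True
    have "(\<Sum>v\<in>Y. hh N (t v)) < (\<Sum>v\<in>Y. hh N (int x) + dd N (int x) * (t v - int x))"
      apply (rule sum_strict_mono_ex1[OF fin])
      using tang nn apply auto[1]
      using tang_strict[of "t v0" "int x" N] v0 by auto
    also have "\<dots> = int y * hh N (int x) + dd N (int x) * ((\<Sum>v\<in>Y. t v) - int x * int y)"
      by (simp add: sum.distrib sum_distrib_left sum_distrib_right sum_subtractf cY algebra_simps)
    also have "\<dots> \<le> int y * hh N (int x)"
      using True S by (simp add: mult_nonneg_nonpos)
    finally show ?thesis by (intro exI[of _ x]) auto
  next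
    case False
    define a where "a = (LEAST a::nat. dd N (int a) < 0)"
    have da: "dd N (int a) < 0" unfolding a_def by (rule LeastI[of "\<lambda>a. dd N (int a) < 0" x]) (use False in simp)
    have ax: "a \<le> x" unfolding a_def by (rule Least_le) (use False in simp)
    have a1: "a \<ge> 1"
    proof (rule ccontr)
      assume "\<not> a \<ge> 1" hence "a = 0" by simp
      moreover have "N*N \<ge> 2*2" using N2 by (intro mult_mono) auto
      ultimately show False using da unfolding dd_def by (simp add: power2_eq_square)
    qed
    define b where "b = a - 1"
    have ab: "a = b + 1" using a1 b_def by simp
    have db: "dd N (int b) \<ge> 0"
      using not_less_Least[of b "\<lambda>a. dd N (int a) < 0"] ab unfolding a_def[symmetric] by linarith
    have step: "hh N (int a) = hh N (int b) + dd N (int b)" using hh_step[of N "int b"] ab by (simp add: add.commute)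
    have hmax: "hh N s \<le> hh N (int a)" if "0 \<le> s" for s
    proof (cases "s \<ge> int a")
      case True
      have "dd N (int a) * (s - int a) \<le> 0" using True da by (simp add: mult_nonpos_nonneg)
      thus ?thesis using tang[of s "int a" N] that by linarith
    next
      case False
      hence "s - int b \<le> 0" using ab by simp
      hence "dd N (int b) * (s - int b) \<le> 0" using db by (simp add: mult_nonneg_nonpos)
      thus ?thesis using tang[of s "int b" N] that step db by linarith
    qed
    have hpos: "hh N (int a) > 0"
    proof -
      have "3*(int b)^2 + 3*int b + 1 \<le> N^2" using db unfolding dd_def by simp
      moreover have "(int a)^2 = (int b)^2 + 2 * int b + 1" using ab by (simp add: power2_eq_square algebra_simps)
      moreover have "N*N \<ge> 2*2" using N2 by (intro mult_mono) auto
      moreover have "(int b)^2 \<ge> 0" by simp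
      ultimately have "(int a)^2 < N^2" 
      proof (cases "b = 0")
        case True thus ?thesis using \<open>(int a)^2 = _\<close> \<open>N*N \<ge> 2*2\<close> by (simp add: power2_eq_square)
      next
        case False hence "int b \<ge> 1" by simp
        thus ?thesis using \<open>(int a)^2 = _\<close> \<open>3*(int b)^2 + 3*int b + 1 \<le> N^2\<close> \<open>(int b)^2 \<ge> 0\<close> by linarith
      qed
      moreover have "int a > 0" using a1 by simp
      ultimately show ?thesis unfolding hh_def by simp
    qed
    have sumle: "(\<Sum>v\<in>Y. hh N (t v)) \<le> int y * hh N (int a)"
    proof -
      have "(\<Sum>v\<in>Y. hh N (t v)) \<le> (\<Sum>v\<in>Y. hh N (int a))"
        by (rule sum_mono) (use hmax nn in auto)
      thus ?thesis using cY by simp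
    qed
    show ?thesis
    proof (cases "a < x")
      case True
      have "int y * hh N (int a) < int (x + y - a) * hh N (int a)"
        using True hpos by (intro mult_strict_right_mono) auto
      thus ?thesis using sumle ax by (intro exI[of _ a]) auto
    next
      case False
      hence axe: "a = x" using ax by simp
      show ?thesis
      proof (cases "dd N (int b) = 0")
        case True
        have "int y * hh N (int a) < int (x + y - b) * hh N (int b)"
          using True step hpos ab axe by (simp add: algebra_simps)
        thus ?thesis using sumle ab axe by (intro exI[of _ b]) auto
      next
        case False
        have "(\<Sum>v\<in>Y. hh N (t v)) < (\<Sum>v\<in>Y. hh N (int a))"
        proof (rule sum_strict_mono_ex1[OF fin])
          show "\<forall>v\<in>Y. hh N (t v) \<le> hh N (int a)" using hmax nn by auto
          have "t v0 - int b \<le> 0" using v0 ab axe by simp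
          hence "dd N (int b) * (t v0 - int b) \<le> 0" using db by (simp add: mult_nonneg_nonpos)
          hence "hh N (t v0) \<le> hh N (int b)" using tang[of "t v0" "int b" N] v0 by linarith
          also have "\<dots> < hh N (int a)" using step db False by linarith
          finally show "\<exists>v\<in>Y. hh N (t v) < hh N (int a)" using v0 by blast
        qed
        thus ?thesis using cY axe by (intro exI[of _ x]) auto
      qed
    qed
  qed
qed



lemma sum_snd_count:
  fixes \<phi> :: "'a \<Rightarrow> int"
  assumes "finite A" "snd ` A \<subseteq> B" "finite B"
  shows "(\<Sum>p\<in>A. \<phi> (snd p)) = (\<Sum>v\<in>B. \<phi> v * int (card {a. (a,v)\<in>A}))"
proof -
  have "(\<Sum>p\<in>A. \<phi> (snd p)) = (\<Sum>v\<in>B. \<Sum>p\<in>{p. p\<in>A \<and> snd p = v}. \<phi> (snd p))"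
    using sum.group[OF assms(1) assms(3) assms(2), of "\<lambda>p. \<phi> (snd p)"] by simp
  also have "\<dots> = (\<Sum>v\<in>B. \<phi> v * int (card {a. (a,v)\<in>A}))"
  proof (rule sum.cong[OF refl])
    fix v assume "v \<in> B"
    have e: "{p. p\<in>A \<and> snd p = v} = (\<lambda>a. (a,v)) ` {a. (a,v)\<in>A}" by force
    have "card {p. p\<in>A \<and> snd p = v} = card {a. (a,v)\<in>A}"
      unfolding e by (rule card_image) (auto simp: inj_on_def)
    moreover have "(\<Sum>p\<in>{p. p\<in>A \<and> snd p = v}. \<phi> (snd p)) = (\<Sum>p\<in>{p. p\<in>A \<and> snd p = v}. \<phi> v)"
      by (rule sum.cong) auto
    ultimately show "(\<Sum>p\<in>{p. p\<in>A \<and> snd p = v}. \<phi> (snd p)) = \<phi> v * int (card {a. (a,v)\<in>A})"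
      by simp
  qed
  finally show ?thesis .
qed

lemma sum_fst_count:
  fixes \<phi> :: "'a \<Rightarrow> int"
  assumes "finite A" "fst ` A \<subseteq> B" "finite B"
  shows "(\<Sum>p\<in>A. \<phi> (fst p)) = (\<Sum>v\<in>B. \<phi> v * int (card {a. (v,a)\<in>A}))"
proof -
  have "(\<Sum>p\<in>A. \<phi> (fst p)) = (\<Sum>v\<in>B. \<Sum>p\<in>{p. p\<in>A \<and> fst p = v}. \<phi> (fst p))"
    using sum.group[OF assms(1) assms(3) assms(2), of "\<lambda>p. \<phi> (fst p)"] by simp
  also have "\<dots> = (\<Sum>v\<in>B. \<phi> v * int (card {a. (v,a)\<in>A}))"
  proof (rule sum.cong[OF refl])
    fix v assume "v \<in> B"
    have e: "{p. p\<in>A \<and> fst p = v} = (\<lambda>a. (v,a)) ` {a. (v,a)\<in>A}" by force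
    have "card {p. p\<in>A \<and> fst p = v} = card {a. (v,a)\<in>A}"
      unfolding e by (rule card_image) (auto simp: inj_on_def)
    moreover have "(\<Sum>p\<in>{p. p\<in>A \<and> fst p = v}. \<phi> (fst p)) = (\<Sum>p\<in>{p. p\<in>A \<and> fst p = v}. \<phi> v)"
      by (rule sum.cong) auto
    ultimately show "(\<Sum>p\<in>{p. p\<in>A \<and> fst p = v}. \<phi> (fst p)) = \<phi> v * int (card {a. (v,a)\<in>A})"
      by simp
  qed
  finally show ?thesis .
qed

lemma edge_V: assumes "simple_graph V E" "{a,b} \<in> E" shows "a \<in> V" "b \<in> V"
proof -
  obtain u v where "u \<in> V" "v \<in> V" "{a,b} = {u,v}" using assms unfolding simple_graph_def by blast
  thus "a \<in> V" "b \<in> V" by (auto simp: doubleton_eq_iff)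
qed

lemma finite_E: assumes "simple_graph V E" shows "finite E"
proof -
  have "E \<subseteq> Pow V" using assms unfolding simple_graph_def by auto
  moreover have "finite (Pow V)" using assms unfolding simple_graph_def by simp
  ultimately show ?thesis by (rule finite_subset)
qed

lemma arc_V: assumes "simple_graph V E" "arc E a b" shows "a \<in> V" "b \<in> V"
proof -
  have "{a,b} \<in> E" using assms(2) unfolding arc_def by simp
  thus "a \<in> V" "b \<in> V" using edge_V[OF assms(1)] by blast+
qed

lemma deg_le: assumes "simple_graph V E" "v \<in> V" shows "deg E v \<le> card V - 1"
proof -
  have "{e\<in>E. v\<in>e} \<subseteq> (\<lambda>w. {v,w}) ` (V - {v})"
  proof
    fix e assume "e \<in> {e\<in>E. v\<in>e}"
    then obtain p q where "p\<in>V" "q\<in>V" "p\<noteq>q" "e={p,q}" "v\<in>e" "e \<in> E"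
      using assms unfolding simple_graph_def by blast
    thus "e \<in> (\<lambda>w. {v,w}) ` (V - {v})" by auto
  qed
  hence "deg E v \<le> card ((\<lambda>w. {v,w}) ` (V - {v}))" unfolding deg_def
    using assms by (intro card_mono) (auto simp: simple_graph_def)
  also have "\<dots> \<le> card (V - {v})" by (rule card_image_le) (use assms in \<open>auto simp: simple_graph_def\<close>)
  also have "\<dots> = card V - 1" using assms by (simp add: simple_graph_def)
  finally show ?thesis .
qed

lemma indeg_le: assumes "simple_graph V E" shows "indeg E v \<le> deg E v"
proof -
  have "indeg E v = card ((\<lambda>a. {a,v}) ` {a. arc E a v})"
    unfolding indeg_def by (rule card_image[symmetric]) (auto simp: inj_on_def doubleton_eq_iff arc_def)
  also have "\<dots> \<le> deg E v" unfolding deg_def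
    by (rule card_mono) (use finite_E[OF assms] in \<open>auto simp: arc_def\<close>)
  finally show ?thesis .
qed

lemma finite_in: assumes "simple_graph V E" shows "finite {a. arc E a v}" "finite {a. arc E v a}"
proof -
  have f: "finite V" using assms by (simp add: simple_graph_def)
  show "finite {a. arc E a v}" by (rule finite_subset[OF _ f]) (use arc_V[OF assms] in blast)
  show "finite {a. arc E v a}" by (rule finite_subset[OF _ f]) (use arc_V[OF assms] in blast)
qed

definition arcs :: "'a set set \<Rightarrow> ('a \<times> 'a) set" where "arcs E = {(a,b). arc E a b}"

lemma arcs_sub: assumes "simple_graph V E" shows "arcs E \<subseteq> V \<times> V" "finite (arcs E)"
proof -
  show s: "arcs E \<subseteq> V \<times> V" unfolding arcs_def using arc_V[OF assms] by blast
  show "finite (arcs E)" by (rule finite_subset[OF s]) (use assms in \<open>simp add: simple_graph_def\<close>)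
qed

lemma cM2_arcs: assumes "simple_graph V E"
  shows "cM2 E = (\<Sum>p\<in>arcs E. int (deg E (fst p))^2 - int (deg E (snd p))^2)"
proof -
  define P where "P = {(u, v). {u, v} \<in> E \<and> u \<noteq> v}"
  define D where "D = (\<lambda>p. int (deg E (fst p))^2 - int (deg E (snd p))^2)"
  define \<psi> where "\<psi> = (\<lambda>p. if deg E (snd p) < deg E (fst p) then D p else 0)"
  have fP: "finite P"
  proof (rule finite_subset)
    show "P \<subseteq> V \<times> V" unfolding P_def using edge_V[OF assms] by blast
  qed (use assms in \<open>simp add: simple_graph_def\<close>)
  have sw: "prod.swap ` P = P" unfolding P_def by (auto simp: insert_commute)
  have pt: "\<bar>D p\<bar> = \<psi> p + \<psi> (prod.swap p)" for p
    unfolding \<psi>_def D_def by (cases p) auto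
  have "(\<Sum>p\<in>P. \<psi> (prod.swap p)) = (\<Sum>p\<in>prod.swap ` P. \<psi> p)"
    by (rule sum.reindex[symmetric, unfolded comp_def]) simp
  hence s2: "(\<Sum>p\<in>P. \<psi> (prod.swap p)) = (\<Sum>p\<in>P. \<psi> p)" using sw by simp
  have "(\<Sum>p\<in>P. \<psi> p) = (\<Sum>p\<in>{p\<in>P. deg E (snd p) < deg E (fst p)}. D p)"
    unfolding \<psi>_def by (rule sum.inter_filter[symmetric]) (rule fP)
  also have "{p\<in>P. deg E (snd p) < deg E (fst p)} = arcs E"
    unfolding P_def arcs_def arc_def by auto
  finally have s3: "(\<Sum>p\<in>P. \<psi> p) = (\<Sum>p\<in>arcs E. D p)" .
  have "cM2 E = (\<Sum>p\<in>P. \<bar>D p\<bar>) div 2"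
    unfolding cM2_def P_def D_def by (simp add: case_prod_beta)
  also have "(\<Sum>p\<in>P. \<bar>D p\<bar>) = 2 * (\<Sum>p\<in>arcs E. D p)"
    unfolding pt sum.distrib s2 s3 by simp
  finally show ?thesis unfolding D_def by simp
qed



lemma cM2_nonneg: "cM2 E \<ge> 0"
  unfolding cM2_def by (intro pos_imp_zdiv_nonneg_iff[THEN iffD2] sum_nonneg) auto

lemma split_graph:
  assumes fV: "finite V" and kn: "k + 1 < card V"
  shows "\<exists>E'. simple_graph V E' \<and> cM2 E' = int (card V - k) * hh (int (card V) - 1) (int k)"
proof -
  define n where "n = card V"
  have kle: "k \<le> card V" using kn by simp
  obtain K where KV: "K \<subseteq> V" and cK: "card K = k" and fK: "finite K"
    using obtain_subset_with_card_n[OF kle] by blast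
  define E' where "E' = {{a,b} | a b. a \<in> K \<and> b \<in> V \<and> a \<noteq> b}"
  have sg: "simple_graph V E'" unfolding simple_graph_def
  proof (intro conjI ballI)
    show "finite V" by (rule fV)
    fix e assume "e \<in> E'"
    then obtain a b where "a \<in> K" "b \<in> V" "a \<noteq> b" "e = {a,b}" unfolding E'_def by blast
    thus "\<exists>u v. u \<in> V \<and> v \<in> V \<and> u \<noteq> v \<and> e = {u, v}" using KV by blast
  qed
  have degK: "deg E' a = n - 1" if "a \<in> K" for a
  proof -
    have "{e\<in>E'. a\<in>e} = (\<lambda>w. {a,w}) ` (V - {a})"
    proof
      show "{e\<in>E'. a\<in>e} \<subseteq> (\<lambda>w. {a,w}) ` (V - {a})"
      proof
        fix e assume "e \<in> {e\<in>E'. a\<in>e}"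
        then obtain p q where pq: "p \<in> K" "q \<in> V" "p \<noteq> q" "e = {p,q}" "a \<in> e" unfolding E'_def by blast
        show "e \<in> (\<lambda>w. {a,w}) ` (V - {a})"
        proof (cases "a = p")
          case True thus ?thesis using pq by auto
        next
          case False hence "a = q" using pq by auto
          thus ?thesis using pq KV by (auto simp: insert_commute)
        qed
      qed
      show "(\<lambda>w. {a,w}) ` (V - {a}) \<subseteq> {e\<in>E'. a\<in>e}" unfolding E'_def using that by blast
    qed
    moreover have "card ((\<lambda>w. {a,w}) ` (V - {a})) = card (V - {a})"
      by (rule card_image) (auto simp: inj_on_def doubleton_eq_iff)
    ultimately show ?thesis unfolding deg_def n_def using that KV fV by auto
  qed
  have degR: "deg E' b = k" if "b \<in> V" "b \<notin> K" for b
  proof -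
    have "{e\<in>E'. b\<in>e} = (\<lambda>w. {b,w}) ` K"
    proof
      show "{e\<in>E'. b\<in>e} \<subseteq> (\<lambda>w. {b,w}) ` K"
      proof
        fix e assume "e \<in> {e\<in>E'. b\<in>e}"
        then obtain p q where pq: "p \<in> K" "q \<in> V" "p \<noteq> q" "e = {p,q}" "b \<in> e" unfolding E'_def by blast
        hence "b = q" using that by auto
        thus "e \<in> (\<lambda>w. {b,w}) ` K" using pq by (auto simp: insert_commute)
      qed
      show "(\<lambda>w. {b,w}) ` K \<subseteq> {e\<in>E'. b\<in>e}"
      proof
        fix e assume "e \<in> (\<lambda>w. {b,w}) ` K"
        then obtain w where "w \<in> K" "e = {b,w}" by blast
        moreover hence "w \<noteq> b" using that by auto
        ultimately show "e \<in> {e\<in>E'. b\<in>e}" unfolding E'_def using that by (auto simp: insert_commute)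
      qed
    qed
    moreover have "card ((\<lambda>w. {b,w}) ` K) = card K"
      by (rule card_image) (use that in \<open>auto simp: inj_on_def doubleton_eq_iff\<close>)
    ultimately show ?thesis unfolding deg_def using cK by simp
  qed
  have arcs_eq: "arcs E' = K \<times> (V - K)"
  proof
    show "arcs E' \<subseteq> K \<times> (V - K)"
    proof
      fix p assume "p \<in> arcs E'"
      then obtain a b where p: "p = (a,b)" and ar: "arc E' a b" unfolding arcs_def by blast
      have ab: "a \<in> V" "b \<in> V" using arc_V[OF sg ar] by auto
      have "{a,b} \<in> E'" using ar unfolding arc_def by simp
      then obtain c d where cd: "c \<in> K" "d \<in> V" "c \<noteq> d" "{a,b} = {c,d}" unfolding E'_def by blast
      have "b \<notin> K"
      proof
        assume "b \<in> K"
        hence "deg E' b = n - 1" by (rule degK)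
        moreover have "deg E' a \<le> card V - 1" by (rule deg_le[OF sg ab(1)])
        ultimately show False using ar unfolding arc_def n_def by simp
      qed
      moreover hence "a \<in> K" using cd by (auto simp: doubleton_eq_iff)
      ultimately show "p \<in> K \<times> (V - K)" using p ab by auto
    qed
    show "K \<times> (V - K) \<subseteq> arcs E'"
    proof
      fix p assume "p \<in> K \<times> (V - K)"
      then obtain a b where p: "p = (a,b)" "a \<in> K" "b \<in> V" "b \<notin> K" by blast
      have "{a,b} \<in> E'" "a \<noteq> b" unfolding E'_def using p by auto
      moreover have "deg E' a > deg E' b" using degK[OF p(2)] degR[OF p(3,4)] kn n_def by simp
      ultimately show "p \<in> arcs E'" unfolding arcs_def arc_def using p by simp
    qed
  qed
  have "cM2 E' = (\<Sum>p\<in>K \<times> (V - K). int (deg E' (fst p))^2 - int (deg E' (snd p))^2)"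
    using cM2_arcs[OF sg] arcs_eq by simp
  also have "\<dots> = (\<Sum>p\<in>K \<times> (V - K). int (n - 1)^2 - int k^2)"
    by (rule sum.cong) (auto simp: degK degR)
  also have "\<dots> = int k * int (n - k) * (int (n - 1)^2 - int k^2)"
    using cK fK KV fV by (simp add: card_cartesian_product card_Diff_subset of_nat_diff n_def)
  also have "\<dots> = int (card V - k) * hh (int (card V) - 1) (int k)"
    unfolding hh_def n_def using kn by (simp add: of_nat_diff algebra_simps)
  finally show ?thesis using sg by blast
qed

theorem claim6:
  fixes V :: "'a set" and E :: "'a set set"
  assumes "simple_graph V E"
    and "\<forall>V' (E' :: 'a set set). simple_graph V' E' \<and> card V' = card V \<longrightarrow> cM2 E' \<le> cM2 E"
    and "u \<in> Xset V E" and "v \<in> Xset V E"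
  shows "out_nbrs E u \<inter> Yset V E = out_nbrs E v \<inter> Yset V E"
proof -
  note sg = assms(1)
  have fV: "finite V" using sg by (simp add: simple_graph_def)
  define X where "X = Xset V E"
  define Y where "Y = Yset V E"
  define n where "n = card V"
  define x where "x = card X"
  define y where "y = card Y"
  define N where "N = int x + int y - 1"
  define A where "A = arcs E"
  define d where "d = (\<lambda>v. int (deg E v))"
  define g where "g = (\<lambda>v. N^2 - (d v)^2)"
  define ii where "ii = (\<lambda>v. int (indeg E v))"
  define oo where "oo = (\<lambda>v. int (outdeg E v))"
  define t where "t = (\<lambda>v. ii v - oo v)"
  have VXY: "V = X \<union> Y" "X \<inter> Y = {}" unfolding X_def Y_def Xset_def Yset_def by auto
  have fX: "finite X" unfolding X_def Xset_def using fV by simp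
  have fY: "finite Y" unfolding Y_def Yset_def using fV by simp
  have nxy: "n = x + y" unfolding n_def x_def y_def VXY(1) by (rule card_Un_disjoint[OF fX fY VXY(2)])
  have fA: "finite A" and AV: "A \<subseteq> V \<times> V" using arcs_sub[OF sg] A_def by auto
  have inA: "card {a. (a,w) \<in> A} = indeg E w" for w unfolding A_def arcs_def indeg_def by simp
  have outA: "card {a. (w,a) \<in> A} = outdeg E w" for w unfolding A_def arcs_def outdeg_def by simp
  have sA: "snd ` A \<subseteq> V" "fst ` A \<subseteq> V" using AV by auto
  have B: "cM2 E \<le> (\<Sum>v\<in>Y. hh N (t v))"
  proof -
    have "cM2 E = (\<Sum>p\<in>A. g (snd p) - g (fst p))"
      unfolding cM2_arcs[OF sg] A_def by (rule sum.cong[OF refl]) (simp add: g_def d_def)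
    also have "\<dots> = (\<Sum>p\<in>A. g (snd p)) - (\<Sum>p\<in>A. g (fst p))" by (rule sum_subtractf)
    also have "(\<Sum>p\<in>A. g (snd p)) = (\<Sum>v\<in>V. g v * ii v)"
      unfolding ii_def inA[symmetric] by (rule sum_snd_count[OF fA sA(1) fV])
    also have "(\<Sum>p\<in>A. g (fst p)) = (\<Sum>v\<in>V. g v * oo v)"
      unfolding oo_def outA[symmetric] by (rule sum_fst_count[OF fA sA(2) fV])
    also have "(\<Sum>v\<in>V. g v * ii v) - (\<Sum>v\<in>V. g v * oo v) = (\<Sum>v\<in>V. g v * t v)"
      unfolding t_def sum_subtractf[symmetric] by (rule sum.cong[OF refl]) (simp add: right_diff_distrib)
    also have "\<dots> = (\<Sum>v\<in>X. g v * t v) + (\<Sum>v\<in>Y. g v * t v)"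
      unfolding VXY(1) by (rule sum.union_disjoint[OF fX fY VXY(2)])
    also have "\<dots> \<le> 0 + (\<Sum>v\<in>Y. hh N (t v))"
    proof (rule add_mono)
      show "(\<Sum>v\<in>X. g v * t v) \<le> 0"
      proof (rule sum_nonpos)
        fix w assume w: "w \<in> X"
        have wV: "w \<in> V" using w VXY(1) by blast
        have "deg E w \<le> n - 1" unfolding n_def by (rule deg_le[OF sg wV])
        moreover have "X \<noteq> {}" using w by blast
        hence "x \<ge> 1" using fX unfolding x_def by (simp add: Suc_le_eq card_gt_0_iff)
        ultimately have "d w \<le> N" "0 \<le> d w" unfolding d_def N_def using nxy by linarith+
        hence "0 \<le> g w" unfolding g_def by (simp add: power_mono)
        moreover have "t w \<le> 0" using w unfolding X_def Xset_def t_def ii_def oo_def by simp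
        ultimately show "g w * t w \<le> 0" by (simp add: mult_nonneg_nonpos)
      qed
      show "(\<Sum>v\<in>Y. g v * t v) \<le> (\<Sum>v\<in>Y. hh N (t v))"
      proof (rule sum_mono)
        fix w assume w: "w \<in> Y"
        have t0: "0 \<le> t w" using w unfolding Y_def Yset_def t_def ii_def oo_def by simp
        have "t w \<le> d w" using indeg_le[OF sg, of w] unfolding t_def ii_def d_def oo_def by simp
        hence "(t w)^2 \<le> (d w)^2" using t0 by (simp add: power_mono)
        hence "g w \<le> N^2 - (t w)^2" unfolding g_def by simp
        hence "g w * t w \<le> (N^2 - (t w)^2) * t w" using t0 by (rule mult_right_mono)
        thus "g w * t w \<le> hh N (t w)" unfolding hh_def by (simp add: mult.commute)
      qed
    qed
    finally show ?thesis by simp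
  qed
  define AXY where "AXY = A \<inter> (X \<times> Y)"
  have C: "(\<Sum>v\<in>Y. t v) \<le> int (card AXY)"
  proof -
    define A1 where "A1 = {p\<in>A. snd p \<in> Y}"
    define A2 where "A2 = {p\<in>A. fst p \<in> Y}"
    have f1: "finite A1" "finite A2" using fA A1_def A2_def by auto
    have "int (card A1) = (\<Sum>p\<in>A1. (\<lambda>_. 1::int) (snd p))" by simp
    also have "\<dots> = (\<Sum>v\<in>Y. 1 * int (card {a. (a,v)\<in>A1}))"
      by (rule sum_snd_count[OF f1(1) _ fY]) (auto simp: A1_def)
    also have "\<dots> = (\<Sum>v\<in>Y. ii v)"
      by (rule sum.cong) (auto simp: A1_def ii_def inA[symmetric])
    finally have s1: "(\<Sum>v\<in>Y. ii v) = int (card A1)" by simp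
    have "int (card A2) = (\<Sum>p\<in>A2. (\<lambda>_. 1::int) (fst p))" by simp
    also have "\<dots> = (\<Sum>v\<in>Y. 1 * int (card {a. (v,a)\<in>A2}))"
      by (rule sum_fst_count[OF f1(2) _ fY]) (auto simp: A2_def)
    also have "\<dots> = (\<Sum>v\<in>Y. oo v)"
      by (rule sum.cong) (auto simp: A2_def oo_def outA[symmetric])
    finally have s2: "(\<Sum>v\<in>Y. oo v) = int (card A2)" by simp
    have "A1 \<subseteq> A2 \<union> AXY" unfolding A1_def A2_def AXY_def using AV VXY by auto
    hence "card A1 \<le> card (A2 \<union> AXY)" using f1 fA AXY_def by (intro card_mono) auto
    also have "\<dots> \<le> card A2 + card AXY" by (rule card_Un_le)
    finally show ?thesis unfolding t_def using s1 s2 by (simp add: sum_subtractf)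
  qed
  have AXYc: "card AXY \<le> x * y" 
  proof -
    have "card AXY \<le> card (X \<times> Y)" unfolding AXY_def using fX fY by (intro card_mono) auto
    thus ?thesis by (simp add: card_cartesian_product x_def y_def)
  qed
  have D: "int (n - k) * hh N (int k) \<le> cM2 E" if "k \<le> n" for k
  proof (cases "k + 1 < n")
    case True
    obtain E' where E': "simple_graph V E'" "cM2 E' = int (n - k) * hh (int n - 1) (int k)"
      using split_graph[OF fV, of k] True n_def by auto
    have "cM2 E' \<le> cM2 E" using assms(2) E'(1) by blast
    moreover have "int n - 1 = N" using nxy N_def by simp
    ultimately show ?thesis using E'(2) by simp
  next
    case False
    hence "k = n \<or> k + 1 = n" using that by auto
    hence "int (n - k) * hh N (int k) = 0"
      unfolding hh_def N_def using nxy by (auto simp: of_nat_diff)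
    thus ?thesis using cM2_nonneg[of E] by linarith
  qed
  have Sxy: "int x * int y \<le> (\<Sum>v\<in>Y. t v)"
  proof (rule ccontr)
    assume ne: "\<not> ?thesis"
    have "\<exists>v0\<in>Y. t v0 < int x"
    proof (rule ccontr)
      assume "\<not> ?thesis"
      hence "(\<Sum>v\<in>Y. int x) \<le> (\<Sum>v\<in>Y. t v)" by (intro sum_mono) auto
      thus False using ne y_def by (simp add: mult.commute)
    qed
    then obtain v0 where v0: "v0 \<in> Y" "t v0 < int x" by blast
    have t1: "1 \<le> t v0" using v0 unfolding Y_def Yset_def t_def ii_def oo_def by simp
    have nn: "\<forall>v\<in>Y. 0 \<le> t v" unfolding Y_def Yset_def t_def ii_def oo_def by simp
    have "int (card AXY) \<le> int (x * y)" using AXYc by (simp only: of_nat_le_iff)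
    hence Sle: "(\<Sum>v\<in>Y. t v) \<le> int x * int y" using C by simp
    obtain k where k: "k \<le> x + y" "(\<Sum>v\<in>Y. hh N (t v)) < int (x+y-k) * hh N (int k)"
      using pure[OF fY y_def[symmetric] nn v0(1) t1 v0(2) Sle N_def] by blast
    show False using k D[of k] B nxy by simp
  qed
  have "int (x * y) \<le> int (card AXY)" using Sxy C by simp
  hence "x * y \<le> card AXY" by (simp only: of_nat_le_iff)
  hence "card AXY = card (X \<times> Y)"
    using AXYc by (simp add: card_cartesian_product x_def y_def)
  hence AXYe: "AXY = X \<times> Y"
    unfolding AXY_def using fX fY by (intro card_subset_eq) auto
  have key: "out_nbrs E w \<inter> Y = Y" if "w \<in> X" for w
  proof
    show "out_nbrs E w \<inter> Y \<subseteq> Y" by blast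
    show "Y \<subseteq> out_nbrs E w \<inter> Y"
    proof
      fix z assume "z \<in> Y"
      hence "(w,z) \<in> AXY" using AXYe that by blast
      thus "z \<in> out_nbrs E w \<inter> Y" using \<open>z \<in> Y\<close> unfolding AXY_def A_def arcs_def out_nbrs_def by simp
    qed
  qed
  show ?thesis using key[of u] key[of v] assms(3,4) unfolding X_def Y_def by simp
qed

end
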